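(* Let $(b_n)$ be real numbers with $0 \le b_n < \ln n$, $b_n = (1 - o(1)) \ln n$, and $\ln n - b_n \to \infty$ as $n \to \infty$. Then there exists a sequence $\varepsilon_n \to 0$ such that for all sufficiently large $n$, \[ \mathbb{P}(F_n^- \le b_n) \le (\ln n)^{d-1} \exp\!\left[-\exp\!\left\{(1+\varepsilon_n)\tfrac12(\ln n - b_n)\right\}\right]. \]
   Context: Fix an integer $d \ge 1$. Let $X^{(1)}, X^{(2)}, \dots$ be i.i.d. random vectors in $\mathbb{R}^d$ with independent Exponential$(1)$ coordinates. For $x,y \in \mathbb{R}^d$ write $x \prec y$ if $x_j<y_j$ for all $j$, $x \le y$ if $x_j \le y_j$ for all $j$, and $x_+ := \sum_j x_j$. The record-setting region at time $n$ is $\mathrm{RS}_n := \{x \in \mathbb{R}^d : 0 \le x,\ x \not\prec X^{(i)} \text{ for all } 1 \le i \le n\}$, and its frontier $F_n$ is the topological boundary of $\mathrm{RS}_n$ relative to $[0,\infty)^d$. Define $F_n^- := \min\{x_+ : x \in F_n\}$. *)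

theory Defs
  imports "HOL-Probability.Probability"
begin

definition strictly_below :: "real ^ 'd \<Rightarrow> real ^ 'd \<Rightarrow> bool" where
  "strictly_below x y \<longleftrightarrow> (\<forall>j. x $ j < y $ j)"

definition orthant :: "(real ^ 'd) set" where
  "orthant = {x. \<forall>j. 0 \<le> x $ j}"

definition RS :: "(nat \<Rightarrow> real ^ 'd) \<Rightarrow> nat \<Rightarrow> (real ^ 'd) set" where
  "RS Xs n = {x \<in> orthant. \<forall>i\<in>{1..n}. \<not> strictly_below x (Xs i)}"

definition frontierRS :: "(nat \<Rightarrow> real ^ 'd) \<Rightarrow> nat \<Rightarrow> (real ^ 'd) set" where
  "frontierRS Xs n = (subtopology euclidean orthant) frontier_of (RS Xs n)"

definition Fminus :: "(nat \<Rightarrow> real ^ 'd) \<Rightarrow> nat \<Rightarrow> real" where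
  "Fminus Xs n = Inf ((\<lambda>x. \<Sum>j\<in>UNIV. x $ j) ` frontierRS Xs n)"

end

theory Submission
  imports Defs
begin


context prob_space begin

lemma block_prob:
  fixes X :: "nat \<Rightarrow> 'a \<Rightarrow> real ^ 'd"
  assumes indep: "indep_vars (\<lambda>_. borel) (\<lambda>(i, j) \<omega>. X i \<omega> $ j) ({1..} \<times> UNIV)"
    and expo: "\<And>i j. i \<ge> 1 \<Longrightarrow> distributed M lborel (\<lambda>\<omega>. X i \<omega> $ j) (exponential_density 1)"
    and k: "k \<ge> 1" and y: "\<And>j. 0 \<le> y $ j"
  shows "prob {\<omega> \<in> space M. strictly_below y (X k \<omega>)} = exp (- (\<Sum>j\<in>UNIV. y $ j))"
proof -
  let ?Z = "(\<lambda>(i, j) \<omega>. X i \<omega> $ j) :: nat \<times> 'd \<Rightarrow> 'a \<Rightarrow> real"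
  let ?J = "(\<lambda>j. (k, j)) ` (UNIV :: 'd set)"
  let ?A = "\<lambda>p::nat\<times>'d. {y $ snd p <..}"
  have 1: "prob (\<Inter>p\<in>?J. ?Z p -` ?A p \<inter> space M) = (\<Prod>p\<in>?J. prob (?Z p -` ?A p \<inter> space M))"
    using k by (intro indep_varsD[OF indep]) auto
  have 2: "(\<Inter>p\<in>?J. ?Z p -` ?A p \<inter> space M) = {\<omega> \<in> space M. strictly_below y (X k \<omega>)}"
    by (auto simp: strictly_below_def)
  have 3: "prob ((\<lambda>\<omega>. X k \<omega> $ j) -` {y $ j<..} \<inter> space M) = exp (- y $ j)" for j
  proof -
    have "(\<lambda>\<omega>. X k \<omega> $ j) -` {y $ j<..} \<inter> space M = {\<omega> \<in> space M. y $ j < X k \<omega> $ j}" by auto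
    moreover have "\<P>(\<omega> in M. y $ j < X k \<omega> $ j) = exp (- (y $ j) * 1)"
      by (rule exponential_distributedD_gt[OF expo[OF k] y]) simp
    ultimately show ?thesis by simp
  qed
  have "(\<Prod>p\<in>?J. prob (?Z p -` ?A p \<inter> space M)) = (\<Prod>j\<in>UNIV. exp (- y $ j))"
    by (subst prod.reindex) (auto simp: inj_on_def 3 simp del: vimage_Collect_eq)
  also have "\<dots> = exp (- (\<Sum>j\<in>UNIV. y $ j))"
    by (simp add: exp_sum[symmetric] sum_negf)
  finally show ?thesis using 1 2 by simp
qed

lemma all_prob:
  fixes X :: "nat \<Rightarrow> 'a \<Rightarrow> real ^ 'd"
  assumes indep: "indep_vars (\<lambda>_. borel) (\<lambda>(i, j) \<omega>. X i \<omega> $ j) ({1..} \<times> UNIV)"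
    and expo: "\<And>i j. i \<ge> 1 \<Longrightarrow> distributed M lborel (\<lambda>\<omega>. X i \<omega> $ j) (exponential_density 1)"
    and y: "\<And>j. 0 \<le> y $ j"
  shows "prob {\<omega> \<in> space M. \<forall>k\<in>{1..n}. \<not> strictly_below y (X k \<omega>)} = (1 - exp (- (\<Sum>j\<in>UNIV. y $ j))) ^ n"
proof (cases "n = 0")
  case True
  then show ?thesis by (simp add: prob_space)
next
  case False
  let ?Z = "(\<lambda>(i, j) \<omega>. X i \<omega> $ j) :: nat \<times> 'd \<Rightarrow> 'a \<Rightarrow> real"
  define K where "K = (\<lambda>k::nat. {k} \<times> (UNIV :: 'd set))"
  have ind2: "indep_vars (\<lambda>k. PiM (K k) (\<lambda>_. borel)) (\<lambda>k \<omega>. restrict (\<lambda>p. ?Z p \<omega>) (K k)) {1..}"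
    by (rule indep_vars_restrict[OF indep]) (auto simp: K_def disjoint_family_on_def)
  define A where "A = (\<lambda>k. {f \<in> space (PiM (K k) (\<lambda>_. borel :: real measure)). \<not> (\<forall>j. y $ j < f (k, j))})"
  have Asets: "A k \<in> sets (PiM (K k) (\<lambda>_. borel))" for k
  proof -
    have "A k = space (PiM (K k) (\<lambda>_. borel :: real measure)) - (\<Inter>j. {f \<in> space (PiM (K k) (\<lambda>_. borel :: real measure)). y $ j < f (k, j)})"
      by (auto simp: A_def)
    also have "\<dots> \<in> sets (PiM (K k) (\<lambda>_. borel))"
    proof -
      have *: "{f \<in> space (PiM (K k) (\<lambda>_. borel :: real measure)). y $ j < f (k, j)} \<in> sets (PiM (K k) (\<lambda>_. borel))" for j
      proof -
        have "(\<lambda>f. f (k, j)) \<in> borel_measurable (PiM (K k) (\<lambda>_. borel :: real measure))"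
          by (rule measurable_component_singleton) (simp add: K_def)
        then show ?thesis by measurable
      qed
      show ?thesis
        by (rule sets.compl_sets, rule sets.countable_INT') (use * in auto)
    qed
    finally show ?thesis .
  qed
  have rv: "(\<lambda>\<omega>. X i \<omega> $ j) \<in> borel_measurable M" if "i \<ge> 1" for i j
    using distributed_measurable[OF expo[OF that]] by simp
  have ev: "{\<omega> \<in> space M. strictly_below y (X k \<omega>)} \<in> events" if "k \<ge> 1" for k
  proof -
    have "{\<omega> \<in> space M. strictly_below y (X k \<omega>)} = (\<Inter>j. {\<omega> \<in> space M. y $ j < X k \<omega> $ j}) \<inter> space M"
      by (auto simp: strictly_below_def)
    also have "\<dots> \<in> events"
      using rv[OF that] by (intro sets.Int sets.countable_INT') auto
    finally show ?thesis .
  qed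
  have pre: "(\<lambda>\<omega>. restrict (\<lambda>p. ?Z p \<omega>) (K k)) -` A k \<inter> space M = space M - {\<omega> \<in> space M. strictly_below y (X k \<omega>)}" for k
    by (auto simp: A_def K_def space_PiM strictly_below_def)
  have "prob (\<Inter>k\<in>{1..n}. (\<lambda>\<omega>. restrict (\<lambda>p. ?Z p \<omega>) (K k)) -` A k \<inter> space M)
      = (\<Prod>k\<in>{1..n}. prob ((\<lambda>\<omega>. restrict (\<lambda>p. ?Z p \<omega>) (K k)) -` A k \<inter> space M))"
    using False by (intro indep_varsD[OF ind2]) (auto simp: Asets)
  also have "\<dots> = (\<Prod>k\<in>{1..n}. 1 - exp (- (\<Sum>j\<in>UNIV. y $ j)))"
    by (intro prod.cong refl) (simp add: pre prob_compl ev block_prob[OF indep expo _ y])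
  also have "\<dots> = (1 - exp (- (\<Sum>j\<in>UNIV. y $ j))) ^ n" by simp
  moreover have "(\<Inter>k\<in>{1..n}. (\<lambda>\<omega>. restrict (\<lambda>p. ?Z p \<omega>) (K k)) -` A k \<inter> space M)
     = {\<omega> \<in> space M. \<forall>k\<in>{1..n}. \<not> strictly_below y (X k \<omega>)}"
    using False unfolding pre by auto
  ultimately show ?thesis by simp
qed

end


lemma RS_eq: "RS Xs n = orthant \<inter> (\<Inter>k\<in>{1..n}. \<Union>j. {x. Xs k $ j \<le> x $ j})"
  by (auto simp: RS_def strictly_below_def not_less)

lemma closed_comp_ge: "closed {x::real^'d. c \<le> x $ j}"
  by (intro closed_Collect_le continuous_intros)

lemma convex_orthant: "convex orthant"
  unfolding orthant_def convex_def by (auto intro!: add_nonneg_nonneg mult_nonneg_nonneg)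

lemma geom:
  fixes Xs :: "nat \<Rightarrow> real ^ 'd"
  assumes n: "n \<ge> 1" and pos: "\<And>j. 0 < Xs 1 $ j" and F: "Fminus Xs n \<le> b" and eta: "\<eta> > 0"
  shows "\<exists>x. (\<forall>j. 0 \<le> x $ j) \<and> (\<forall>k\<in>{1..n}. \<not> strictly_below x (Xs k)) \<and> (\<Sum>j\<in>UNIV. x $ j) < b + \<eta>"
proof -
  let ?T = "subtopology euclidean (orthant :: (real^'d) set)"
  have top: "topspace ?T = orthant" by simp
  have cl: "closed (\<Inter>k\<in>{1..n}. \<Union>j. {x::real^'d. Xs k $ j \<le> x $ j})"
    by (intro closed_INT closed_Union) (auto intro: closed_comp_ge)
  have clin: "closedin ?T (RS Xs n)"
    unfolding RS_eq using closedin_closed_Int[OF cl] by simp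
  have conn: "connected_space ?T"
    by (intro connected_space_subtopology) (simp add: convex_connected convex_orthant)
  define c where "c = (\<Sum>k\<in>{1..n}. \<Sum>j\<in>UNIV. \<bar>Xs k $ j\<bar>)"
  have "(\<chi> j. c) \<in> RS Xs n"
  proof -
    have le: "\<bar>Xs k $ j\<bar> \<le> c" if "k \<in> {1..n}" for k j
    proof -
      have "\<bar>Xs k $ j\<bar> \<le> (\<Sum>j\<in>UNIV. \<bar>Xs k $ j\<bar>)"
        by (rule member_le_sum) auto
      also have "\<dots> \<le> c" unfolding c_def
        using that by (intro member_le_sum) auto
      finally show ?thesis .
    qed
    have "0 \<le> c" unfolding c_def by (intro sum_nonneg) auto
    then show ?thesis
      using le by (force simp: RS_def orthant_def strictly_below_def not_less
          intro: order_trans[OF abs_ge_self])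
  qed
  hence ne: "RS Xs n \<noteq> {}" by auto
  have "(0::real^'d) \<in> orthant" "(0::real^'d) \<notin> RS Xs n"
    using n pos by (auto simp: RS_def orthant_def strictly_below_def intro!: bexI[of _ 1])
  hence nt: "RS Xs n \<noteq> orthant" by auto
  have sub: "RS Xs n \<subseteq> topspace ?T" by (auto simp: RS_def)
  have Fne: "frontierRS Xs n \<noteq> {}"
    unfolding frontierRS_def using connected_space_frontier_eq_empty[of ?T "RS Xs n"] conn sub ne nt top
    by auto
  have Fsub: "frontierRS Xs n \<subseteq> RS Xs n"
    unfolding frontierRS_def by (rule frontier_of_subset_closedin[OF clin])
  let ?S = "(\<lambda>x. \<Sum>j\<in>UNIV. x $ j) ` frontierRS Xs n"
  have bdd: "bdd_below ?S"
    by (rule bdd_belowI[of _ 0]) (use Fsub in \<open>auto simp: RS_def orthant_def intro!: sum_nonneg\<close>)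
  have "Inf ?S < b + \<eta>" using F eta unfolding Fminus_def by simp
  then obtain x where "x \<in> frontierRS Xs n" "(\<Sum>j\<in>UNIV. x $ j) < b + \<eta>"
    using cInf_less_iff[OF _ bdd] Fne by auto
  then show ?thesis using Fsub by (auto simp: RS_def orthant_def)
qed



definition yv :: "'d \<Rightarrow> real \<Rightarrow> real \<Rightarrow> ('d \<Rightarrow> nat) \<Rightarrow> real^'d::finite" where
  "yv j0 h B m = (\<chi> j. if j = j0 then B - h * (\<Sum>i\<in>UNIV-{j0}. real (m i)) else h * real (m j))"

definition Idx :: "'d::finite \<Rightarrow> real \<Rightarrow> real \<Rightarrow> nat \<Rightarrow> ('d \<Rightarrow> nat) set" where
  "Idx j0 h B K = {m \<in> PiE (UNIV - {j0}) (\<lambda>_. {0..K}). h * (\<Sum>i\<in>UNIV-{j0}. real (m i)) \<le> B}"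

lemma card_Idx: fixes j0 :: "'d::finite" shows "card (Idx j0 h B K) \<le> (K+1) ^ (CARD('d) - 1)" and finite_Idx: "finite (Idx j0 h B K)"
proof -
  have f: "finite (PiE (UNIV - {j0}) (\<lambda>_::'d. {0..K}))" by (intro finite_PiE) auto
  have "card (Idx j0 h B K) \<le> card (PiE (UNIV - {j0}) (\<lambda>_::'d. {0..K}))"
    unfolding Idx_def by (rule card_mono[OF f]) auto
  also have "\<dots> = (K+1) ^ (CARD('d) - 1)"
    by (simp add: card_PiE card_Diff_singleton)
  finally show "card (Idx j0 h B K) \<le> (K+1) ^ (CARD('d) - 1)" .
  show "finite (Idx j0 h B K)" unfolding Idx_def using f by (auto intro: finite_subset)
qed

lemma yv_props:
  assumes m: "m \<in> Idx j0 h B K" and h: "h \<ge> 0"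
  shows "\<forall>j. 0 \<le> yv j0 h B m $ j" "(\<Sum>j\<in>UNIV. yv j0 h B m $ j) = B"
proof -
  show "\<forall>j. 0 \<le> yv j0 h B m $ j" using m h by (auto simp: yv_def Idx_def)
  have "(\<Sum>j\<in>UNIV. yv j0 h B m $ j) = yv j0 h B m $ j0 + (\<Sum>j\<in>UNIV-{j0}. yv j0 h B m $ j)"
    by (subst sum.remove[of UNIV j0]) auto
  also have "(\<Sum>j\<in>UNIV-{j0}. yv j0 h B m $ j) = (\<Sum>j\<in>UNIV-{j0}. h * real (m j))"
    by (intro sum.cong) (auto simp: yv_def)
  finally show "(\<Sum>j\<in>UNIV. yv j0 h B m $ j) = B" by (simp add: yv_def sum_distrib_left)
qed

lemma discr:
  fixes x :: "real^'d" and Xs :: "nat \<Rightarrow> real^'d"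
  assumes h: "h > 0" and x0: "\<forall>j. 0 \<le> x$j" and nsb: "\<forall>k\<in>{1..n}. \<not> strictly_below x (Xs k)"
    and xs: "(\<Sum>j\<in>UNIV. x$j) < b + h"
  shows "\<exists>m\<in>Idx j0 h (b + real CARD('d) * h) (nat \<lceil>b / h\<rceil> + 2).
           \<forall>k\<in>{1..n}. \<not> strictly_below (yv j0 h (b + real CARD('d) * h) m) (Xs k)"
proof -
  define B where "B = b + real CARD('d) * h"
  define K where "K = nat \<lceil>b / h\<rceil> + 2"
  define m where "m = restrict (\<lambda>j. nat \<lceil>x$j / h\<rceil>) (UNIV - {j0})"
  have xj: "x $ j \<le> (\<Sum>j\<in>UNIV. x$j)" for j by (rule member_le_sum) (use x0 in auto)
  have ceil1: "real (nat \<lceil>x$j / h\<rceil>) = of_int \<lceil>x$j / h\<rceil>" for j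
  proof -
    have "0 \<le> x$j / h" using x0 h by simp
    then have "0 \<le> \<lceil>x$j / h\<rceil>" by linarith
    then show ?thesis by simp
  qed
  have up: "x $ j \<le> h * real (nat \<lceil>x$j / h\<rceil>)" for j
  proof -
    have "x$j / h \<le> of_int \<lceil>x$j / h\<rceil>" by (rule le_of_int_ceiling)
    then have "h * (x$j / h) \<le> h * of_int \<lceil>x$j / h\<rceil>" using h by (intro mult_left_mono) auto
    then show ?thesis using h by (simp add: ceil1)
  qed
  have upb: "h * real (nat \<lceil>x$j / h\<rceil>) \<le> x $ j + h" for j
  proof -
    have "of_int \<lceil>x$j / h\<rceil> \<le> x$j / h + 1" by linarith
    then have "h * of_int \<lceil>x$j / h\<rceil> \<le> h * (x$j / h + 1)" using h by (intro mult_left_mono) auto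
    then show ?thesis using h by (simp add: ceil1 distrib_left)
  qed
  have mK: "nat \<lceil>x$j / h\<rceil> \<le> K" for j
  proof -
    have "x $ j < b + h" using xj[of j] xs by linarith
    then have "x $ j / h < (b + h) / h" using h by (simp add: divide_strict_right_mono)
    also have "(b + h) / h = b / h + 1" using h by (simp add: field_simps)
    finally have a: "x $ j / h < b / h + 1" .
    have "\<lceil>x$j / h\<rceil> < \<lceil>b / h\<rceil> + 2"
    proof -
      have "of_int \<lceil>x$j / h\<rceil> < x$j / h + 1" by linarith
      moreover have "b / h \<le> of_int \<lceil>b / h\<rceil>" by linarith
      ultimately have "(of_int \<lceil>x$j / h\<rceil> :: real) < of_int \<lceil>b / h\<rceil> + 2" using a by linarith
      then have "(of_int \<lceil>x$j / h\<rceil> :: real) < of_int (\<lceil>b / h\<rceil> + 2)" by simp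
      then show ?thesis by (simp only: of_int_less_iff)
    qed
    then show ?thesis unfolding K_def by linarith
  qed
  have card1: "real (card (UNIV - {j0})) = real CARD('d) - 1"
    by (simp add: card_Diff_singleton of_nat_diff)
  have split: "(\<Sum>j\<in>UNIV. x$j) = x $ j0 + (\<Sum>j\<in>UNIV-{j0}. x$j)"
    by (subst sum.remove[of UNIV j0]) auto
  have sumb: "h * (\<Sum>i\<in>UNIV-{j0}. real (m i)) \<le> (\<Sum>i\<in>UNIV-{j0}. x$i) + (real CARD('d) - 1) * h"
  proof -
    have "h * (\<Sum>i\<in>UNIV-{j0}. real (m i)) = (\<Sum>i\<in>UNIV-{j0}. h * real (nat \<lceil>x$i / h\<rceil>))"
      by (simp add: sum_distrib_left m_def)
    also have "\<dots> \<le> (\<Sum>i\<in>UNIV-{j0}. x$i + h)" by (intro sum_mono upb)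
    also have "\<dots> = (\<Sum>i\<in>UNIV-{j0}. x$i) + (real CARD('d) - 1) * h"
      by (simp add: sum.distrib card1)
    finally show ?thesis .
  qed
  have sumB: "h * (\<Sum>i\<in>UNIV-{j0}. real (m i)) \<le> B - x $ j0"
    using sumb split xs unfolding B_def by (simp add: algebra_simps)
  have mem: "m \<in> Idx j0 h B K"
  proof -
    have "m \<in> PiE (UNIV - {j0}) (\<lambda>_. {0..K})"
      unfolding m_def using mK by (simp add: restrict_PiE_iff)
    moreover have "h * (\<Sum>i\<in>UNIV-{j0}. real (m i)) \<le> B"
      using sumB x0[rule_format, of j0] by linarith
    ultimately show ?thesis unfolding Idx_def by blast
  qed
  have ge: "x $ j \<le> yv j0 h B m $ j" for j
  proof (cases "j = j0")
    case True
    then show ?thesis using sumB by (simp add: yv_def)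
  next
    case False
    then have "yv j0 h B m $ j = h * real (nat \<lceil>x$j / h\<rceil>)" by (simp add: yv_def m_def)
    then show ?thesis using up[of j] by simp
  qed
  have "\<forall>k\<in>{1..n}. \<not> strictly_below (yv j0 h B m) (Xs k)"
  proof (intro ballI notI)
    fix k assume k: "k \<in> {1..n}" and sb: "strictly_below (yv j0 h B m) (Xs k)"
    have "strictly_below x (Xs k)" unfolding strictly_below_def
    proof
      fix j show "x $ j < Xs k $ j" using ge[of j] sb unfolding strictly_below_def by (meson le_less_trans)
    qed
    then show False using nsb k by blast
  qed
  then show ?thesis using mem unfolding B_def K_def by blast
qed


context prob_space begin

lemma event_bound:
  fixes X :: "nat \<Rightarrow> 'a \<Rightarrow> real ^ 'd"
  assumes indep: "indep_vars (\<lambda>_. borel) (\<lambda>(i, j) \<omega>. X i \<omega> $ j) ({1..} \<times> UNIV)"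
    and expo: "\<And>i j. i \<ge> 1 \<Longrightarrow> distributed M lborel (\<lambda>\<omega>. X i \<omega> $ j) (exponential_density 1)"
    and n: "n \<ge> 1" and h: "h > 0" and b: "0 \<le> b"
  shows "prob {\<omega> \<in> space M. Fminus (\<lambda>i. X i \<omega>) n \<le> b}
     \<le> real ((nat \<lceil>b / h\<rceil> + 2 + 1) ^ (CARD('d) - 1)) * (1 - exp (- (b + real CARD('d) * h))) ^ n"
proof -
  define B where "B = b + real CARD('d) * h"
  define K where "K = nat \<lceil>b / h\<rceil> + 2"
  define j0 where "j0 = (undefined :: 'd)"
  define G where "G = (\<lambda>m. {\<omega> \<in> space M. \<forall>k\<in>{1..n}. \<not> strictly_below (yv j0 h B m) (X k \<omega>)})"
  define N where "N = (\<lambda>j. {\<omega> \<in> space M. X 1 \<omega> $ j \<le> 0})"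
  have rv: "(\<lambda>\<omega>. X i \<omega> $ j) \<in> borel_measurable M" if "i \<ge> 1" for i j
    using distributed_measurable[OF expo[OF that]] by simp
  have Nev: "N j \<in> events" for j
    unfolding N_def using rv[of 1 j] by measurable
  have Nz: "prob (N j) = 0" for j
    using exponential_distributedD_le[OF expo[of 1 j], of 0] unfolding N_def by simp
  have ev: "{\<omega> \<in> space M. strictly_below y (X k \<omega>)} \<in> events" if "k \<ge> 1" for k y
  proof -
    have "{\<omega> \<in> space M. strictly_below y (X k \<omega>)} = (\<Inter>j. {\<omega> \<in> space M. y $ j < X k \<omega> $ j}) \<inter> space M"
      by (auto simp: strictly_below_def)
    also have "\<dots> \<in> events"
      using rv[OF that] by (intro sets.Int sets.countable_INT') auto
    finally show ?thesis .
  qed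
  have Gev: "G m \<in> events" for m
  proof -
    have "G m = space M - (\<Union>k\<in>{1..n}. {\<omega> \<in> space M. strictly_below (yv j0 h B m) (X k \<omega>)})"
      unfolding G_def by auto
    also have "\<dots> \<in> events" using ev by auto
    finally show ?thesis .
  qed
  have Gp: "prob (G m) = (1 - exp (- B)) ^ n" if "m \<in> Idx j0 h B K" for m
    unfolding G_def using all_prob[OF indep expo, of "yv j0 h B m" n] yv_props[OF that] h by simp
  have sub: "{\<omega> \<in> space M. Fminus (\<lambda>i. X i \<omega>) n \<le> b} \<subseteq> (\<Union>j. N j) \<union> (\<Union>m\<in>Idx j0 h B K. G m)"
  proof
    fix \<omega> assume w: "\<omega> \<in> {\<omega> \<in> space M. Fminus (\<lambda>i. X i \<omega>) n \<le> b}"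
    show "\<omega> \<in> (\<Union>j. N j) \<union> (\<Union>m\<in>Idx j0 h B K. G m)"
    proof (cases "\<forall>j. 0 < X 1 \<omega> $ j")
      case False then show ?thesis using w by (auto simp: N_def not_less)
    next
      case True
      obtain x where x: "\<forall>j. 0 \<le> x $ j" "\<forall>k\<in>{1..n}. \<not> strictly_below x (X k \<omega>)" "(\<Sum>j\<in>UNIV. x $ j) < b + h"
        using geom[of n "\<lambda>i. X i \<omega>" b h] n True w h by auto
      obtain m where "m \<in> Idx j0 h B K" "\<forall>k\<in>{1..n}. \<not> strictly_below (yv j0 h B m) (X k \<omega>)"
        using discr[OF h x, of j0] unfolding B_def K_def by blast
      then show ?thesis using w unfolding G_def by blast
    qed
  qed
  have "prob {\<omega> \<in> space M. Fminus (\<lambda>i. X i \<omega>) n \<le> b} \<le> prob ((\<Union>j. N j) \<union> (\<Union>m\<in>Idx j0 h B K. G m))"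
    by (rule finite_measure_mono[OF sub]) (use Nev Gev finite_Idx in auto)
  also have "\<dots> \<le> prob (\<Union>j. N j) + prob (\<Union>m\<in>Idx j0 h B K. G m)"
    by (rule measure_Un_le) (use Nev Gev finite_Idx in auto)
  also have "prob (\<Union>j. N j) \<le> (\<Sum>j\<in>UNIV. prob (N j))"
    by (rule finite_measure_subadditive_finite) (use Nev in auto)
  also have "prob (\<Union>m\<in>Idx j0 h B K. G m) \<le> (\<Sum>m\<in>Idx j0 h B K. prob (G m))"
    by (rule finite_measure_subadditive_finite) (use Gev finite_Idx in auto)
  also have "(\<Sum>m\<in>Idx j0 h B K. prob (G m)) = real (card (Idx j0 h B K)) * (1 - exp (- B)) ^ n"
    using Gp by simp
  also have "\<dots> \<le> real ((K + 1) ^ (CARD('d) - 1)) * (1 - exp (- B)) ^ n"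
  proof (rule mult_right_mono)
    show "real (card (Idx j0 h B K)) \<le> real ((K + 1) ^ (CARD('d) - 1))"
      using card_Idx[of j0 h B K] by linarith
    have "0 \<le> B" unfolding B_def using b h by simp
    then show "0 \<le> (1 - exp (- B)) ^ n" by simp
  qed
  finally show ?thesis unfolding B_def K_def by (simp add: Nz)
qed

end


lemma arith:
  fixes b :: real and nn d :: nat
  assumes nn: "nn \<ge> 3" and b: "0 \<le> b" and g: "16 * real d \<le> ln (real nn) - b" and d: "d \<ge> 1"
  shows "real ((nat \<lceil>b / ((ln (real nn) - b) / (4 * real d))\<rceil> + 2 + 1) ^ (d - 1))
           * (1 - exp (- (b + real d * ((ln (real nn) - b) / (4 * real d))))) ^ nn
         \<le> ln (real nn) ^ (d - 1) * exp (- exp ((1 + 0) * (1/2) * (ln (real nn) - b)))"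
proof -
  define L where "L = ln (real nn)"
  define g where "g = L - b"
  define h where "h = g / (4 * real d)"
  have dpos: "real d > 0" using d by simp
  have g0: "g \<ge> 16 * real d" using g unfolding g_def L_def by simp
  have h4: "h \<ge> 4" unfolding h_def using g0 dpos by (simp add: field_simps)
  have dh: "real d * h = g / 4" unfolding h_def using dpos by (simp add: field_simps)
  have L1: "L \<ge> 1"
  proof -
    have "ln (exp 1) \<le> ln (real nn)" using nn exp_le by (subst ln_le_cancel_iff) auto
    then show ?thesis unfolding L_def by simp
  qed
  have bh: "b / h \<le> b" using b h4 by (simp add: divide_le_eq mult_le_cancel_left1 )
  have K: "real (nat \<lceil>b / h\<rceil> + 2 + 1) \<le> 5 * L"
  proof -
    have "0 \<le> b / h" using b h4 by simp
    then have "real (nat \<lceil>b / h\<rceil>) = of_int \<lceil>b / h\<rceil>" by simp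
    moreover have "of_int \<lceil>b / h\<rceil> \<le> b / h + 1" by linarith
    moreover have "b \<le> L" using g0 dpos unfolding g_def by linarith
    moreover have "real (nat \<lceil>b / h\<rceil> + 2 + 1) = real (nat \<lceil>b / h\<rceil>) + 3" by simp
    ultimately show ?thesis using bh L1 by linarith
  qed
  have P1: "real ((nat \<lceil>b / h\<rceil> + 2 + 1) ^ (d - 1)) \<le> (5 * L) ^ (d - 1)"
    unfolding of_nat_power by (rule power_mono[OF K]) simp
  define B where "B = b + g / 4"
  have B0: "0 \<le> B" unfolding B_def using b g0 dpos by simp
  have P2: "(1 - exp (- B)) ^ nn \<le> exp (- exp (3 * g / 4))"
  proof -
    have "(1 - exp (- B)) ^ nn \<le> exp (- exp (- B)) ^ nn"
      by (rule power_mono) (use B0 exp_ge_add_one_self[of "- exp (- B)"] in auto)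
    also have "\<dots> = exp (- (real nn * exp (- B)))"
      by (simp add: exp_of_nat_mult[symmetric])
    also have "real nn * exp (- B) = exp (3 * g / 4)"
    proof -
      have "real nn = exp L" unfolding L_def using nn by simp
      then have "real nn * exp (- B) = exp (L - B)" by (simp add: exp_diff exp_minus field_simps)
      also have "L - B = 3 * g / 4" unfolding B_def g_def by (simp add: field_simps)
      finally show ?thesis .
    qed
    finally show ?thesis .
  qed
  have P3: "5 ^ (d - 1) * exp (- exp (3 * g / 4)) \<le> exp (- exp (g / 2))"
  proof -
    have "(5::real) ^ (d - 1) \<le> exp 4 ^ (d - 1)"
      by (rule power_mono) (use exp_ge_add_one_self[of 4] in auto)
    also have "\<dots> = exp (4 * real (d - 1))" by (simp add: exp_of_nat_mult[symmetric] mult.commute)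
    also have "\<dots> \<le> exp (4 * real d)" using d by simp
    finally have a: "(5::real) ^ (d - 1) \<le> exp (4 * real d)" .
    have "exp (3 * g / 4) = exp (g / 2) * exp (g / 4)" by (simp add: exp_add[symmetric])
    also have "\<dots> \<ge> exp (g / 2) * (1 + g / 4)"
      by (intro mult_left_mono) auto
    finally have "exp (3 * g / 4) \<ge> exp (g / 2) + exp (g / 2) * (g / 4)" by (simp add: algebra_simps)
    moreover have "exp (g / 2) * (g / 4) \<ge> 1 * (g / 4)"
      using g0 dpos by (intro mult_right_mono) auto
    ultimately have c: "exp (3 * g / 4) \<ge> exp (g / 2) + 4 * real d" using g0 by linarith
    have "5 ^ (d - 1) * exp (- exp (3 * g / 4)) \<le> exp (4 * real d) * exp (- exp (3 * g / 4))"
      by (rule mult_right_mono[OF a]) simp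
    also have "\<dots> = exp (4 * real d - exp (3 * g / 4))" by (simp add: exp_add[symmetric])
    also have "\<dots> \<le> exp (- exp (g / 2))" using c by simp
    finally show ?thesis .
  qed
  have "real ((nat \<lceil>b / h\<rceil> + 2 + 1) ^ (d - 1)) * (1 - exp (- B)) ^ nn
        \<le> (5 * L) ^ (d - 1) * exp (- exp (3 * g / 4))"
    by (rule mult_mono[OF P1 P2]) (use L1 B0 in auto)
  also have "\<dots> = L ^ (d - 1) * (5 ^ (d - 1) * exp (- exp (3 * g / 4)))"
    by (simp add: power_mult_distrib)
  also have "\<dots> \<le> L ^ (d - 1) * exp (- exp (g / 2))"
    by (rule mult_left_mono[OF P3]) (use L1 in auto)
  finally have calc: "real ((nat \<lceil>b / h\<rceil> + 2 + 1) ^ (d - 1)) * (1 - exp (- B)) ^ nn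
        \<le> L ^ (d - 1) * exp (- exp (g / 2))" .
  have eq1: "(ln (real nn) - b) / (4 * real d) = h" by (simp add: h_def g_def L_def)
  have eq2: "b + real d * h = B" using dh B_def by simp
  have eq3: "(1 + 0) * (1/2) * (ln (real nn) - b) = g / 2" by (simp add: g_def L_def)
  show ?thesis using calc unfolding eq1 eq2 eq3 by (simp only: L_def)
qed


theorem proposition3p2:
  fixes M :: "'a measure"
    and X :: "nat \<Rightarrow> 'a \<Rightarrow> real ^ 'd"
    and b :: "nat \<Rightarrow> real"
  assumes "prob_space M"
    and indep: "prob_space.indep_vars M (\<lambda>_. borel) (\<lambda>(i, j) \<omega>. X i \<omega> $ j) ({1..} \<times> UNIV)"
    and expo: "\<And>i j. i \<ge> 1 \<Longrightarrow> distributed M lborel (\<lambda>\<omega>. X i \<omega> $ j) (exponential_density 1)"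
    and b_bounds: "\<And>n. n \<ge> 2 \<Longrightarrow> 0 \<le> b n \<and> b n < ln (real n)"
    and b_asymp: "(\<lambda>n. b n / ln (real n)) \<longlonglongrightarrow> 1"
    and b_gap: "filterlim (\<lambda>n. ln (real n) - b n) at_top sequentially"
  shows "\<exists>\<epsilon> :: nat \<Rightarrow> real. \<epsilon> \<longlonglongrightarrow> 0 \<and>
    (\<forall>\<^sub>F n in sequentially.
       measure M {\<omega> \<in> space M. Fminus (\<lambda>i. X i \<omega>) n \<le> b n}
         \<le> ln (real n) ^ (CARD('d) - 1)
            * exp (- exp ((1 + \<epsilon> n) * (1/2) * (ln (real n) - b n))))"
proof -
  interpret P: prob_space M by fact
  have dpos: "CARD('d) \<ge> 1" using zero_less_card_finite[where 'a='d] by linarith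
  have ev1: "\<forall>\<^sub>F n in sequentially. 16 * real CARD('d) \<le> ln (real n) - b n"
    using b_gap unfolding filterlim_at_top by blast
  have ev2: "\<forall>\<^sub>F n in sequentially. n \<ge> (3::nat)" by (rule eventually_ge_at_top)
  have "\<forall>\<^sub>F n in sequentially.
       measure M {\<omega> \<in> space M. Fminus (\<lambda>i. X i \<omega>) n \<le> b n}
         \<le> ln (real n) ^ (CARD('d) - 1)
            * exp (- exp ((1 + 0) * (1/2) * (ln (real n) - b n)))"
    using ev1 ev2
  proof eventually_elim
    case (elim n)
    have b0: "0 \<le> b n" using b_bounds[of n] elim by auto
    define h where "h = (ln (real n) - b n) / (4 * real CARD('d))"
    have d1: "real CARD('d) \<ge> 1" using dpos by simp
    have gp: "ln (real n) - b n > 0" using elim d1 by linarith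
    have h: "h > 0" unfolding h_def using gp d1 by (intro divide_pos_pos) auto
    have "measure M {\<omega> \<in> space M. Fminus (\<lambda>i. X i \<omega>) n \<le> b n}
       \<le> real ((nat \<lceil>b n / h\<rceil> + 2 + 1) ^ (CARD('d) - 1)) * (1 - exp (- (b n + real CARD('d) * h))) ^ n"
      by (rule P.event_bound[OF indep expo _ h b0]) (use elim in auto)
    also have "\<dots> \<le> ln (real n) ^ (CARD('d) - 1) * exp (- exp ((1 + 0) * (1/2) * (ln (real n) - b n)))"
      unfolding h_def by (rule arith) (use elim b0 dpos in auto)
    finally show ?case .
  qed
  then show ?thesis by (intro exI[of _ "\<lambda>_. 0"]) simp
qed

end
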